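(* Let $a_{ij}\ge 0$ for $1\le i\ne j\le N$ with $a_{ij}=a_{ji}$, and let $\mathbf S(t)$ be the stochastic consensus model: independent Poisson processes $N^{ij}$ of rate $a_{ij}$, and $\mathrm dS_i=\sum_{j\ne i}(S_j-S_i)\,\mathrm dN^{ij}$. Let $V(\mathbf S)=\frac1N\sum_{i=1}^N|S_i-\bar S|^2=\frac{1}{2N^2}\sum_{i,j}|S_i-S_j|^2$ with $\bar S=\frac1N\sum_i S_i$. Then $$\frac{d}{dt}\mathbb E[V(\mathbf S(t))]=-\frac{1}{N^2}\mathbb E\Big[\sum_{i,j}a_{ij}|S_j(t)-S_i(t)|^2\Big].$$
   Context: Equivalently, the process has generator $\frac{d}{dt}\mathbb E[\varphi(\mathbf S)]=\sum_{i\ne j}a_{ij}\mathbb E[\varphi(\Phi_{ij}(\mathbf S))-\varphi(\mathbf S)]$, where $\Phi_{ij}$ replaces the $i$th coordinate by the $j$th. *)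

theory Defs
  imports "HOL-Probability.Probability"
begin

text \<open>States of the consensus model: N = CARD('n) agents, each with an opinion in a
Euclidean space 'a; a state is S :: 'a^'n with components S$i.\<close>

definition mean_state :: "'a::euclidean_space ^ 'n::finite \<Rightarrow> 'a" where
  "mean_state S = (1 / real CARD('n)) *\<^sub>R (\<Sum>i\<in>UNIV. S $ i)"

definition variance_state :: "'a::euclidean_space ^ 'n::finite \<Rightarrow> real" where
  "variance_state S = (1 / real CARD('n)) * (\<Sum>i\<in>UNIV. (norm (S $ i - mean_state S))\<^sup>2)"

definition jump_map :: "'n::finite \<Rightarrow> 'n \<Rightarrow> 'a ^ 'n \<Rightarrow> 'a ^ 'n" where
  "jump_map i j S = (\<chi> k. if k = i then S $ j else S $ k)"

text \<open>mu t is the law of S(t). The stochastic consensus model (Poisson clocks of rate a_ij,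
dS_i = sum_j (S_j - S_i) dN^ij) is characterised by its generator (Kolmogorov forward equation):
d/dt E[phi(S)] = sum_{i<>j} a_ij E[phi(Phi_ij S) - phi(S)], for every observable phi whose
expectations are finite along the evolution.\<close>
definition consensus_law ::
  "('n::finite \<Rightarrow> 'n \<Rightarrow> real) \<Rightarrow> (real \<Rightarrow> ('a::euclidean_space ^ 'n) measure) \<Rightarrow> bool" where
  "consensus_law a \<mu> \<longleftrightarrow>
     (\<forall>t\<ge>0. prob_space (\<mu> t) \<and> sets (\<mu> t) = sets borel) \<and>
     (\<forall>\<phi> :: 'a ^ 'n \<Rightarrow> real.
        (\<forall>t\<ge>0. integrable (\<mu> t) \<phi> \<and> (\<forall>i j. integrable (\<mu> t) (\<lambda>S. \<phi> (jump_map i j S)))) \<longrightarrow>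
        (\<forall>t\<ge>0. ((\<lambda>s. \<integral>S. \<phi> S \<partial>\<mu> s) has_real_derivative
           (\<Sum>i\<in>UNIV. \<Sum>j\<in>UNIV - {i}. a i j * (\<integral>S. \<phi> (jump_map i j S) - \<phi> S \<partial>\<mu> t)))
           (at t within {0..})))"

end

theory Submission
  imports Defs
begin

lemma sum_jump_gen:
  fixes f :: "'c::euclidean_space \<Rightarrow> 'b::ab_group_add" and S :: "'c ^ 'n::finite"
  shows "(\<Sum>k\<in>UNIV. f (jump_map i j S $ k)) = (\<Sum>k\<in>UNIV. f (S $ k)) - f (S $ i) + f (S $ j)"
proof -
  have "(\<Sum>k\<in>UNIV. f (jump_map i j S $ k)) = f (S $ j) + (\<Sum>k\<in>UNIV-{i}. f (jump_map i j S $ k))"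
    by (subst sum.remove[of UNIV i]) (auto simp: jump_map_def)
  also have "(\<Sum>k\<in>UNIV-{i}. f (jump_map i j S $ k)) = (\<Sum>k\<in>UNIV-{i}. f (S $ k))"
    by (rule sum.cong) (auto simp: jump_map_def)
  also have "\<dots> = (\<Sum>k\<in>UNIV. f (S $ k)) - f (S $ i)"
    by (subst sum.remove[of UNIV i]) auto
  finally show ?thesis by (simp add: algebra_simps)
qed

lemma e1: fixes x m c :: "'a::euclidean_space"
  shows "(norm (x - c))\<^sup>2 = (norm (x - m))\<^sup>2 + 2 * inner (x - m) (m - c) + (norm (m - c))\<^sup>2"
proof -
  have "x - c = (x - m) + (m - c)" by simp
  then have "(norm (x - c))\<^sup>2 = inner ((x - m) + (m - c)) ((x - m) + (m - c))"
    by (metis power2_norm_eq_inner)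
  also have "\<dots> = inner (x - m) (x - m) + 2 * inner (x - m) (m - c) + inner (m - c) (m - c)"
    by (simp only: inner_add_left inner_add_right inner_commute[of "m - c" "x - m"])
  finally show ?thesis by (simp only: power2_norm_eq_inner)
qed

lemma var_shift:
  fixes S :: "'a::euclidean_space ^ 'n::finite"
  shows "(1 / real CARD('n)) * (\<Sum>k\<in>UNIV. (norm (S $ k - c))\<^sup>2)
     = variance_state S + (norm (mean_state S - c))\<^sup>2"
proof -
  let ?N = "real CARD('n)"
  let ?m = "mean_state S"
  have N: "?N > 0" by simp
  have sm: "(\<Sum>k\<in>UNIV. S $ k) = ?N *\<^sub>R ?m" using N by (simp add: mean_state_def)
  have z: "(\<Sum>k\<in>UNIV. inner (S $ k - ?m) (?m - c)) = 0"
  proof -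
    have "(\<Sum>k\<in>UNIV. inner (S $ k - ?m) (?m - c)) = inner (\<Sum>k\<in>UNIV. S $ k - ?m) (?m - c)"
      by (rule inner_sum_left[symmetric])
    also have "(\<Sum>k\<in>UNIV. S $ k - ?m) = (\<Sum>k\<in>UNIV. S $ k) - ?N *\<^sub>R ?m"
      by (simp add: sum_subtractf sum_constant_scaleR)
    finally show ?thesis by (simp add: sm)
  qed
  have "(\<Sum>k\<in>UNIV. (norm (S $ k - c))\<^sup>2) = (\<Sum>k\<in>UNIV. (norm (S $ k - ?m))\<^sup>2 + 2 * inner (S $ k - ?m) (?m - c) + (norm (?m - c))\<^sup>2)"
    by (rule sum.cong[OF refl], rule e1)
  also have "\<dots> = (\<Sum>k\<in>UNIV. (norm (S $ k - ?m))\<^sup>2) + 2 * (\<Sum>k\<in>UNIV. inner (S $ k - ?m) (?m - c)) + ?N * (norm (?m - c))\<^sup>2"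
    by (simp add: sum.distrib sum_distrib_left)
  finally have "(\<Sum>k\<in>UNIV. (norm (S $ k - c))\<^sup>2) = (\<Sum>k\<in>UNIV. (norm (S $ k - ?m))\<^sup>2) + ?N * (norm (?m - c))\<^sup>2"
    by (simp only: z mult_zero_right add_0_right)
  then have "(1 / ?N) * (\<Sum>k\<in>UNIV. (norm (S $ k - c))\<^sup>2) = (1 / ?N) * (\<Sum>k\<in>UNIV. (norm (S $ k - ?m))\<^sup>2) + (norm (?m - c))\<^sup>2"
    using N by (simp add: distrib_left)
  then show ?thesis by (simp only: variance_state_def)
qed

lemma var_jump_diff:
  fixes S :: "'a::euclidean_space ^ 'n::finite"
  defines "N \<equiv> real CARD('n)"
  shows "variance_state (jump_map i j S) - variance_state S =
     (1/N) * ((norm (S$j))\<^sup>2 - (norm (S$i))\<^sup>2) - (2/N) * inner (mean_state S) (S$j - S$i)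
     - (1/N^2) * (norm (S$j - S$i))\<^sup>2"
proof -
  have N: "N > 0" by (simp add: N_def)
  have V: "variance_state T = (1/N) * (\<Sum>k\<in>UNIV. (norm (T $ k))\<^sup>2) - (norm (mean_state T))\<^sup>2" for T :: "'a ^ 'n"
    using var_shift[of T 0] unfolding N_def by simp
  have m: "mean_state (jump_map i j S) = mean_state S + (1/N) *\<^sub>R (S$j - S$i)"
    unfolding mean_state_def N_def
    by (subst sum_jump_gen[of "\<lambda>x. x"]) (simp add: algebra_simps)
  have q: "(\<Sum>k\<in>UNIV. (norm (jump_map i j S $ k))\<^sup>2) = (\<Sum>k\<in>UNIV. (norm (S $ k))\<^sup>2) - (norm (S$i))\<^sup>2 + (norm (S$j))\<^sup>2"
    by (rule sum_jump_gen)
  show ?thesis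
  proof -
    have sq: "(norm (mean_state S + (1/N) *\<^sub>R (S$j - S$i)))\<^sup>2 = (norm (mean_state S))\<^sup>2
       + (2/N) * inner (mean_state S) (S$j - S$i) + (1/N^2) * (norm (S$j - S$i))\<^sup>2"
      unfolding power2_norm_eq_inner
      by (simp add: inner_add_left inner_add_right inner_commute algebra_simps power2_eq_square)
    show ?thesis unfolding V q m sq by (simp add: algebra_simps)
  qed
qed

lemma var_nonneg: "variance_state (S :: 'a::euclidean_space ^ 'n::finite) \<ge> 0"
  unfolding variance_state_def by (simp add: sum_nonneg)

lemma var_jump_le:
  fixes S :: "'a::euclidean_space ^ 'n::finite"
  shows "variance_state (jump_map i j S) \<le> 2 * variance_state S"
proof -
  let ?N = "real CARD('n)"
  let ?m = "mean_state S"
  let ?Z = "\<Sum>k\<in>UNIV. (norm (S $ k - ?m))\<^sup>2"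
  have N: "?N > 0" by simp
  have A: "variance_state (jump_map i j S) \<le> (1 / ?N) * (\<Sum>k\<in>UNIV. (norm (jump_map i j S $ k - ?m))\<^sup>2)"
  proof -
    have e: "(1 / ?N) * (\<Sum>k\<in>UNIV. (norm (jump_map i j S $ k - ?m))\<^sup>2) = variance_state (jump_map i j S) + (norm (mean_state (jump_map i j S) - ?m))\<^sup>2"
      by (rule var_shift)
    have "(norm (mean_state (jump_map i j S) - ?m))\<^sup>2 \<ge> 0" by (rule zero_le_power2)
    then show ?thesis using e by linarith
  qed
  have B: "(\<Sum>k\<in>UNIV. (norm (jump_map i j S $ k - ?m))\<^sup>2)
     = ?Z - (norm (S $ i - ?m))\<^sup>2 + (norm (S $ j - ?m))\<^sup>2"
    by (rule sum_jump_gen[of "\<lambda>x. (norm (x - ?m))\<^sup>2"])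
  have C1: "(norm (S $ j - ?m))\<^sup>2 \<le> ?Z"
    by (rule member_le_sum[of j UNIV "\<lambda>k. (norm (S $ k - ?m))\<^sup>2"]) auto
  have C2: "(norm (S $ i - ?m))\<^sup>2 \<ge> 0" by (rule zero_le_power2)
  have C: "(\<Sum>k\<in>UNIV. (norm (jump_map i j S $ k - ?m))\<^sup>2) \<le> 2 * ?Z"
    using B C1 C2 by linarith
  have Vd: "variance_state S = (1 / ?N) * ?Z" by (simp add: variance_state_def)
  have "(1 / ?N) * (\<Sum>k\<in>UNIV. (norm (jump_map i j S $ k - ?m))\<^sup>2) \<le> (1 / ?N) * (2 * ?Z)"
    by (rule mult_left_mono[OF C]) (simp only: N less_imp_le zero_le_divide_1_iff)
  also have "\<dots> = 2 * variance_state S" unfolding Vd by (simp only: mult.left_commute)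
  finally show ?thesis using A by linarith
qed

lemma cont_jump: "continuous_on UNIV (jump_map i j :: 'a::euclidean_space ^ 'n::finite \<Rightarrow> _)"
  unfolding jump_map_def
  apply (rule continuous_on_vec_lambda)
  subgoal for k by (cases "k = i") (auto intro!: continuous_intros)
  done

lemma cont_var: "continuous_on UNIV (variance_state :: 'a::euclidean_space ^ 'n::finite \<Rightarrow> real)"
  unfolding variance_state_def mean_state_def
  by (auto intro!: continuous_intros)

lemma antisym_sum_zero:
  fixes a f :: "'n::finite \<Rightarrow> 'n \<Rightarrow> real"
  assumes symm: "\<And>i j. i \<noteq> j \<Longrightarrow> a i j = a j i"
    and anti: "\<And>i j. f i j = - f j i"
  shows "(\<Sum>i\<in>UNIV. \<Sum>j\<in>UNIV - {i}. a i j * f i j) = 0"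
proof -
  let ?g = "\<lambda>i j. if j = i then 0 else a i j * f i j"
  have e: "(\<Sum>i\<in>UNIV. \<Sum>j\<in>UNIV - {i}. a i j * f i j) = (\<Sum>i\<in>UNIV. \<Sum>j\<in>UNIV. ?g i j)"
  proof (rule sum.cong[OF refl])
    fix i :: 'n
    show "(\<Sum>j\<in>UNIV - {i}. a i j * f i j) = (\<Sum>j\<in>UNIV. ?g i j)"
      by (subst sum.remove[of UNIV i]) (auto intro!: sum.cong)
  qed
  have "(\<Sum>i\<in>UNIV. \<Sum>j\<in>UNIV. ?g i j) = (\<Sum>j\<in>UNIV. \<Sum>i\<in>UNIV. ?g i j)"
    by (rule sum.swap)
  also have "\<dots> = (\<Sum>j\<in>UNIV. \<Sum>i\<in>UNIV. - ?g j i)"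
  proof (intro sum.cong refl)
    fix i j :: 'n
    show "?g i j = - ?g j i"
    proof (cases "i = j")
      case True then show ?thesis by simp
    next
      case False then show ?thesis using symm[of i j] anti[of i j] by simp
    qed
  qed
  also have "\<dots> = - (\<Sum>i\<in>UNIV. \<Sum>j\<in>UNIV. ?g i j)"
    by (simp add: sum_negf)
  finally show ?thesis using e by simp
qed

lemma pointwise:
  fixes a :: "'n::finite \<Rightarrow> 'n \<Rightarrow> real" and S :: "'a::euclidean_space ^ 'n"
  assumes symm: "\<And>i j. i \<noteq> j \<Longrightarrow> a i j = a j i"
  shows "(\<Sum>i\<in>UNIV. \<Sum>j\<in>UNIV - {i}. a i j * (variance_state (jump_map i j S) - variance_state S))
    = - (1 / (real CARD('n))\<^sup>2) * (\<Sum>i\<in>UNIV. \<Sum>j\<in>UNIV - {i}. a i j * (norm (S $ j - S $ i))\<^sup>2)"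
proof -
  let ?N = "real CARD('n)"
  define f where "f i j = (1/?N) * ((norm (S$j))\<^sup>2 - (norm (S$i))\<^sup>2) - (2/?N) * inner (mean_state S) (S$j - S$i)" for i j
  have anti: "f i j = - f j i" for i j
    unfolding f_def by (simp add: algebra_simps inner_diff_right)
  have "(\<Sum>i\<in>UNIV. \<Sum>j\<in>UNIV - {i}. a i j * (variance_state (jump_map i j S) - variance_state S))
     = (\<Sum>i\<in>UNIV. \<Sum>j\<in>UNIV - {i}. a i j * f i j + (- (1 / ?N\<^sup>2)) * (a i j * (norm (S $ j - S $ i))\<^sup>2))"
    by (intro sum.cong refl) (simp add: var_jump_diff f_def algebra_simps)
  also have "\<dots> = (\<Sum>i\<in>UNIV. \<Sum>j\<in>UNIV - {i}. a i j * f i j) + (- (1 / ?N\<^sup>2)) * (\<Sum>i\<in>UNIV. \<Sum>j\<in>UNIV - {i}. a i j * (norm (S $ j - S $ i))\<^sup>2)"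
    by (simp only: sum.distrib sum_distrib_left)
  also have "(\<Sum>i\<in>UNIV. \<Sum>j\<in>UNIV - {i}. a i j * f i j) = 0"
    by (rule antisym_sum_zero[OF symm anti])
  finally show ?thesis by simp
qed

theorem mainTheorem11:
  fixes a :: "'n::finite \<Rightarrow> 'n \<Rightarrow> real"
    and \<mu> :: "real \<Rightarrow> ('a::euclidean_space ^ 'n) measure"
  assumes nonneg: "\<And>i j. i \<noteq> j \<Longrightarrow> a i j \<ge> 0"
    and symm: "\<And>i j. i \<noteq> j \<Longrightarrow> a i j = a j i"
    and law: "consensus_law a \<mu>"
    and finite_var: "\<And>t. t \<ge> 0 \<Longrightarrow> integrable (\<mu> t) variance_state"
  shows "\<forall>t\<ge>0. ((\<lambda>s. \<integral>S. variance_state S \<partial>\<mu> s) has_real_derivative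
           - (1 / (real CARD('n))\<^sup>2) *
             (\<integral>S. (\<Sum>i\<in>UNIV. \<Sum>j\<in>UNIV - {i}. a i j * (norm (S $ j - S $ i))\<^sup>2) \<partial>\<mu> t))
         (at t within {0..})"
proof (intro allI impI)
  fix t :: real assume t: "t \<ge> 0"
  have sets: "sets (\<mu> s) = sets borel" if "s \<ge> 0" for s
  proof -
    have "\<forall>t\<ge>0. prob_space (\<mu> t) \<and> sets (\<mu> t) = sets borel"
      using law unfolding consensus_law_def by (rule conjunct1)
    then show ?thesis using that by blast
  qed
  have intJ: "integrable (\<mu> s) (\<lambda>S. variance_state (jump_map i j S))" if s: "s \<ge> 0" for s i j
  proof (rule Bochner_Integration.integrable_bound)
    show "integrable (\<mu> s) (\<lambda>S. 2 * variance_state S)"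
      using finite_var[OF s] by simp
    have "(\<lambda>S. variance_state (jump_map i j S)) \<in> borel_measurable borel"
      by (rule borel_measurable_continuous_onI)
         (rule continuous_on_compose2[OF cont_var cont_jump]; simp)
    then show "(\<lambda>S. variance_state (jump_map i j S)) \<in> borel_measurable (\<mu> s)"
      using measurable_cong_sets[OF sets[OF s] refl] by blast
    show "AE S in \<mu> s. norm (variance_state (jump_map i j S)) \<le> norm (2 * variance_state S)"
    proof (rule AE_I2)
      fix S
      show "norm (variance_state (jump_map i j S)) \<le> norm (2 * variance_state S)"
        using var_jump_le[of i j S] var_nonneg[of "jump_map i j S"] var_nonneg[of S] by simp
    qed
  qed
  have D: "((\<lambda>s. \<integral>S. variance_state S \<partial>\<mu> s) has_real_derivative
           (\<Sum>i\<in>UNIV. \<Sum>j\<in>UNIV - {i}. a i j * (\<integral>S. variance_state (jump_map i j S) - variance_state S \<partial>\<mu> t)))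
           (at t within {0..})"
  proof -
    have L: "\<forall>\<phi> :: 'a ^ 'n \<Rightarrow> real.
        (\<forall>t\<ge>0. integrable (\<mu> t) \<phi> \<and> (\<forall>i j. integrable (\<mu> t) (\<lambda>S. \<phi> (jump_map i j S)))) \<longrightarrow>
        (\<forall>t\<ge>0. ((\<lambda>s. \<integral>S. \<phi> S \<partial>\<mu> s) has_real_derivative
           (\<Sum>i\<in>UNIV. \<Sum>j\<in>UNIV - {i}. a i j * (\<integral>S. \<phi> (jump_map i j S) - \<phi> S \<partial>\<mu> t)))
           (at t within {0..}))"
      using law unfolding consensus_law_def by (rule conjunct2)
    have H: "\<forall>t\<ge>0. integrable (\<mu> t) variance_state \<and> (\<forall>i j. integrable (\<mu> t) (\<lambda>S. variance_state (jump_map i j S)))"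
      using finite_var intJ by blast
    show ?thesis using mp[OF spec[OF L, of variance_state] H] t by blast
  qed
  have "(\<Sum>i\<in>UNIV. \<Sum>j\<in>UNIV - {i}. a i j * (\<integral>S. variance_state (jump_map i j S) - variance_state S \<partial>\<mu> t))
      = (\<Sum>i\<in>UNIV. \<Sum>j\<in>UNIV - {i}. (\<integral>S. a i j * (variance_state (jump_map i j S) - variance_state S) \<partial>\<mu> t))"
    by (simp only: integral_mult_right_zero)
  also have "\<dots> = (\<integral>S. (\<Sum>i\<in>UNIV. \<Sum>j\<in>UNIV - {i}. a i j * (variance_state (jump_map i j S) - variance_state S)) \<partial>\<mu> t)"
  proof -
    have I: "integrable (\<mu> t) (\<lambda>S. a i j * (variance_state (jump_map i j S) - variance_state S))" for i j
      by (intro integrable_mult_right Bochner_Integration.integrable_diff intJ[OF t] finite_var[OF t])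
    have "(\<integral>S. (\<Sum>i\<in>UNIV. \<Sum>j\<in>UNIV - {i}. a i j * (variance_state (jump_map i j S) - variance_state S)) \<partial>\<mu> t)
      = (\<Sum>i\<in>UNIV. \<integral>S. (\<Sum>j\<in>UNIV - {i}. a i j * (variance_state (jump_map i j S) - variance_state S)) \<partial>\<mu> t)"
      by (rule Bochner_Integration.integral_sum) (intro Bochner_Integration.integrable_sum I)
    also have "\<dots> = (\<Sum>i\<in>UNIV. \<Sum>j\<in>UNIV - {i}. (\<integral>S. a i j * (variance_state (jump_map i j S) - variance_state S) \<partial>\<mu> t))"
      by (rule sum.cong[OF refl], rule Bochner_Integration.integral_sum, rule I)
    finally show ?thesis by (rule sym)
  qed
  also have "\<dots> = (\<integral>S. - (1 / (real CARD('n))\<^sup>2) * (\<Sum>i\<in>UNIV. \<Sum>j\<in>UNIV - {i}. a i j * (norm (S $ j - S $ i))\<^sup>2) \<partial>\<mu> t)"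
    by (rule Bochner_Integration.integral_cong[OF refl]) (rule pointwise[OF symm])
  also have "\<dots> = - (1 / (real CARD('n))\<^sup>2) * (\<integral>S. (\<Sum>i\<in>UNIV. \<Sum>j\<in>UNIV - {i}. a i j * (norm (S $ j - S $ i))\<^sup>2) \<partial>\<mu> t)"
    by (rule integral_mult_right_zero)
  finally have E: "(\<Sum>i\<in>UNIV. \<Sum>j\<in>UNIV - {i}. a i j * (\<integral>S. variance_state (jump_map i j S) - variance_state S \<partial>\<mu> t)) =
    - (1 / (real CARD('n))\<^sup>2) * (\<integral>S. (\<Sum>i\<in>UNIV. \<Sum>j\<in>UNIV - {i}. a i j * (norm (S $ j - S $ i))\<^sup>2) \<partial>\<mu> t)" .
  show "((\<lambda>s. \<integral>S. variance_state S \<partial>\<mu> s) has_real_derivative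
           - (1 / (real CARD('n))\<^sup>2) *
             (\<integral>S. (\<Sum>i\<in>UNIV. \<Sum>j\<in>UNIV - {i}. a i j * (norm (S $ j - S $ i))\<^sup>2) \<partial>\<mu> t))
         (at t within {0..})" using D unfolding E .
qed

end
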